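(* Let $p$ be a prime, $a\in\mathbb{N}$, and put $\nu_p=1$ if $p=2$ and $\nu_p=0$ if $p>2$. Let $\mathbf{u}\in(\mathbb{Z}/p^a\mathbb{Z})^4$ with $p\nmid\mathbf{u}$ and $Q_1(\mathbf{u})\equiv Q_2(\mathbf{u})\equiv0\bmod p^a$. Then for every integer $b>a$, $$\#\big\{\mathbf{v}\in(\mathbb{Z}/p^b\mathbb{Z})^4:\ Q_1(\mathbf{v})\equiv Q_2(\mathbf{v})\equiv0\bmod p^b,\ \mathbf{v}\equiv\mathbf{u}\bmod p^a\big\}\le\begin{cases}p^{2(b-a)}&\text{if }p\nmid\Delta,\\ p^{2\nu_p+3(b-a)}&\text{if }p\mid\Delta.\end{cases}$$
   Context: $L_i(x_1,x_2)=a_ix_1+b_ix_2\in\mathbb{Z}[x_1,x_2]$ ($1\le i\le4$) with $\gcd(a_i,b_i)=1$ and pairwise non-proportional; $Q_1(\mathbf{y})=\sum_{i=1}^4a_iy_i^2$, $Q_2(\mathbf{y})=-\sum_{i=1}^4b_iy_i^2$. $\Delta=\prod_{p\in\mathcal{P}}p$ where $\mathcal{P}=\{2\}\cup\{p\text{ prime}: p\mid a_ib_j-a_jb_i\text{ for some }i\ne j\}$. $p\nmid\mathbf{u}$ means not all coordinates of $\mathbf{u}$ are divisible by $p$. *)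

theory Defs
  imports "HOL-Computational_Algebra.Primes" "HOL-Number_Theory.Cong"
begin

text \<open>Linear forms L_i = a_i x_1 + b_i x_2 for i in {1..4}, coefficients given as
  functions a, b :: nat => int on the index set {1..4}.\<close>

definition Q1 :: "(nat \<Rightarrow> int) \<Rightarrow> (nat \<Rightarrow> int) \<Rightarrow> int" where
  "Q1 a y = (\<Sum>i\<in>{1..4}. a i * (y i)^2)"

definition Q2 :: "(nat \<Rightarrow> int) \<Rightarrow> (nat \<Rightarrow> int) \<Rightarrow> int" where
  "Q2 b y = - (\<Sum>i\<in>{1..4}. b i * (y i)^2)"

definition bad_primes :: "(nat \<Rightarrow> int) \<Rightarrow> (nat \<Rightarrow> int) \<Rightarrow> int set" where
  "bad_primes a b = {p. prime p \<and> (p = 2 \<or>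
      (\<exists>i\<in>{1..4}. \<exists>j\<in>{1..4}. i \<noteq> j \<and> p dvd (a i * b j - a j * b i)))}"

definition Delta :: "(nat \<Rightarrow> int) \<Rightarrow> (nat \<Rightarrow> int) \<Rightarrow> int" where
  "Delta a b = (\<Prod>p\<in>bad_primes a b. p)"

definition nu :: "int \<Rightarrow> nat" where
  "nu p = (if p = 2 then 1 else 0)"

text \<open>Vectors in (Z/p^b Z)^4 represented by their canonical representatives in
  {0..<p^b}, indexed by {1..4}, extended by 0 outside.\<close>
definition lifts :: "(nat \<Rightarrow> int) \<Rightarrow> (nat \<Rightarrow> int) \<Rightarrow> int \<Rightarrow> nat \<Rightarrow> nat \<Rightarrow> (nat \<Rightarrow> int) \<Rightarrow> (nat \<Rightarrow> int) set" where
  "lifts a b p e f u = {v. (\<forall>i\<in>{1..4}. 0 \<le> v i \<and> v i < p ^ f) \<and> (\<forall>i. i \<notin> {1..4} \<longrightarrow> v i = 0)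
      \<and> [Q1 a v = 0] (mod p ^ f) \<and> [Q2 b v = 0] (mod p ^ f)
      \<and> (\<forall>i\<in>{1..4}. [v i = u i] (mod p ^ e))}"

end

theory Submission
  imports Defs "HOL-Library.FuncSet"
begin

definition box :: "nat set \<Rightarrow> int \<Rightarrow> (nat \<Rightarrow> int) set" where
  "box I m = {t. (\<forall>i\<in>I. 0 \<le> t i \<and> t i < m) \<and> (\<forall>i. i \<notin> I \<longrightarrow> t i = 0)}"

lemma box_eq_image: "box I m = (\<lambda>g i. if i \<in> I then g i else 0) ` (PiE I (\<lambda>_. {0..<m}))"
proof
  show "box I m \<subseteq> (\<lambda>g i. if i \<in> I then g i else 0) ` (PiE I (\<lambda>_. {0..<m}))"
  proof
    fix t assume t: "t \<in> box I m"
    have "t = (\<lambda>i. if i \<in> I then restrict t I i else 0)" using t unfolding box_def by auto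
    moreover have "restrict t I \<in> PiE I (\<lambda>_. {0..<m})" using t unfolding box_def by auto
    ultimately show "t \<in> (\<lambda>g i. if i \<in> I then g i else 0) ` (PiE I (\<lambda>_. {0..<m}))" by blast
  qed
qed (auto simp: box_def PiE_def Pi_def)

lemma finite_box: "finite I \<Longrightarrow> finite (box I m)"
  unfolding box_eq_image by (intro finite_imageI finite_PiE) auto

lemma card_box: assumes "finite I" "0 \<le> m" shows "int (card (box I m)) \<le> m ^ card I"
proof -
  have "card (box I m) \<le> card (PiE I (\<lambda>_. {0..<m}))" unfolding box_eq_image
    by (rule card_image_le) (intro finite_PiE, use assms in auto)
  also have "\<dots> = nat m ^ card I" using assms by (simp add: card_PiE)
  finally have "int (card (box I m)) \<le> int (nat m ^ card I)" by linarith
  thus ?thesis using assms by simp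
qed

lemma card_fiber:
  assumes "finite B" "\<And>v. v \<in> A \<Longrightarrow> g v \<in> B" "\<And>w. w \<in> B \<Longrightarrow> int (card {v\<in>A. g v = w}) \<le> c"
  shows "int (card A) \<le> c * int (card B)"
proof -
  have "A = (\<Union>w\<in>B. {v\<in>A. g v = w})" using assms(2) by auto
  hence "card A \<le> (\<Sum>w\<in>B. card {v\<in>A. g v = w})" by (metis card_UN_le assms(1))
  hence "int (card A) \<le> (\<Sum>w\<in>B. int (card {v\<in>A. g v = w}))" by (metis of_nat_le_iff of_nat_sum)
  also have "\<dots> \<le> (\<Sum>w\<in>B. c)" by (rule sum_mono) (rule assms(3))
  finally show ?thesis by (simp add: mult.commute)
qed

lemma small_dvd_eq:
  fixes p x y :: int
  assumes "p dvd (x - y)" "0 \<le> x" "x < p" "0 \<le> y" "y < p"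
  shows "x = y"
proof (rule ccontr)
  assume "x \<noteq> y"
  hence "\<bar>p\<bar> \<le> \<bar>x - y\<bar>" using assms(1) dvd_imp_le_int by simp
  thus False using assms by linarith
qed

lemma lin1:
  fixes p :: int
  assumes p: "prime p" and j: "j \<in> {1..4}" and cj: "\<not> p dvd c j"
  shows "int (card {t \<in> box {1..4} p. p dvd (r + (\<Sum>i\<in>{1..4}. c i * t i))}) \<le> p ^ 3"
proof -
  let ?S = "{t \<in> box {1..4} p. p dvd (r + (\<Sum>i\<in>{1..4}. c i * t i))}"
  have inj: "inj_on (\<lambda>t. t(j:=0)) ?S"
  proof (rule inj_onI)
    fix t t' assume t: "t \<in> ?S" and t': "t' \<in> ?S" and eq: "t(j:=0) = t'(j:=0)"
    have oth: "\<forall>i. i \<noteq> j \<longrightarrow> t i = t' i" using eq by (metis fun_upd_other)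
    have "(r + (\<Sum>i\<in>{1..4}. c i * t i)) - (r + (\<Sum>i\<in>{1..4}. c i * t' i)) = (\<Sum>i\<in>{1..4}. c i * (t i - t' i))"
      by (simp add: sum_subtractf right_diff_distrib)
    also have "\<dots> = c j * (t j - t' j) + (\<Sum>i\<in>{1..4}-{j}. c i * (t i - t' i))"
      using j by (simp add: sum.remove)
    also have "(\<Sum>i\<in>{1..4}-{j}. c i * (t i - t' i)) = 0" using oth by (intro sum.neutral) auto
    finally have "p dvd c j * (t j - t' j)" using t t' by (metis (no_types, lifting) add.right_neutral dvd_diff mem_Collect_eq)
    hence "p dvd (t j - t' j)" using p cj prime_dvd_mult_iff by blast
    moreover have "0 \<le> t j" "t j < p" "0 \<le> t' j" "t' j < p" using t t' j unfolding box_def by auto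
    ultimately have "t j = t' j" by (rule small_dvd_eq)
    thus "t = t'" using oth by (metis ext)
  qed
  have sub: "(\<lambda>t. t(j:=0)) ` ?S \<subseteq> box ({1..4}-{j}) p" unfolding box_def by auto
  have "card ?S = card ((\<lambda>t. t(j:=0)) ` ?S)" using inj by (simp add: card_image)
  also have "\<dots> \<le> card (box ({1..4}-{j}) p)" by (rule card_mono[OF finite_box sub]) simp
  finally have "int (card ?S) \<le> int (card (box ({1..4}-{j}) p))" by simp
  also have "\<dots> \<le> p ^ card ({1..4::nat}-{j})" using p by (intro card_box) (auto simp: prime_ge_0_int)
  also have "card ({1..4::nat}-{j}) = 3" using j by simp
  finally show ?thesis .
qed

lemma lin2:
  fixes p :: int
  assumes p: "prime p" and i0: "i0 \<in> {1..4}" and j0: "j0 \<in> {1..4}" and ij: "i0 \<noteq> j0"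
    and m: "\<not> p dvd (c i0 * d j0 - c j0 * d i0)"
  shows "int (card {t \<in> box {1..4} p. p dvd (r + (\<Sum>i\<in>{1..4}. c i * t i)) \<and> p dvd (r' + (\<Sum>i\<in>{1..4}. d i * t i))}) \<le> p ^ 2"
proof -
  let ?S = "{t \<in> box {1..4} p. p dvd (r + (\<Sum>i\<in>{1..4}. c i * t i)) \<and> p dvd (r' + (\<Sum>i\<in>{1..4}. d i * t i))}"
  have red: "(\<Sum>i\<in>{1..4}. f i * (t i - t' i)) = f i0 * (t i0 - t' i0) + f j0 * (t j0 - t' j0)"
    if oth: "\<forall>i. i \<noteq> i0 \<and> i \<noteq> j0 \<longrightarrow> t i = t' i" for f t t' :: "nat \<Rightarrow> int"
  proof -
    have "(\<Sum>i\<in>{1..4}. f i * (t i - t' i)) = f i0 * (t i0 - t' i0) + (\<Sum>i\<in>{1..4}-{i0}. f i * (t i - t' i))"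
      using i0 by (simp add: sum.remove)
    also have "(\<Sum>i\<in>{1..4}-{i0}. f i * (t i - t' i)) = f j0 * (t j0 - t' j0) + (\<Sum>i\<in>{1..4}-{i0}-{j0}. f i * (t i - t' i))"
      using j0 ij by (subst sum.remove[of _ j0]) auto
    also have "(\<Sum>i\<in>{1..4}-{i0}-{j0}. f i * (t i - t' i)) = 0"
    proof (rule sum.neutral, rule ballI)
      fix x assume "x \<in> {1..4}-{i0}-{j0}"
      hence "t x = t' x" using oth by blast
      thus "f x * (t x - t' x) = 0" by simp
    qed
    finally show ?thesis by simp
  qed
  have inj: "inj_on (\<lambda>t. t(i0:=0, j0:=0)) ?S"
  proof (rule inj_onI)
    fix t t' assume t: "t \<in> ?S" and t': "t' \<in> ?S" and eq: "t(i0:=0, j0:=0) = t'(i0:=0, j0:=0)"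
    have oth: "\<forall>i. i \<noteq> i0 \<and> i \<noteq> j0 \<longrightarrow> t i = t' i" using eq by (metis fun_upd_other)
    have e1: "(r + (\<Sum>i\<in>{1..4}. c i * t i)) - (r + (\<Sum>i\<in>{1..4}. c i * t' i)) = (\<Sum>i\<in>{1..4}. c i * (t i - t' i))"
      by (simp add: sum_subtractf right_diff_distrib)
    have e2: "(r' + (\<Sum>i\<in>{1..4}. d i * t i)) - (r' + (\<Sum>i\<in>{1..4}. d i * t' i)) = (\<Sum>i\<in>{1..4}. d i * (t i - t' i))"
      by (simp add: sum_subtractf right_diff_distrib)
    define x where "x = t i0 - t' i0"
    define y where "y = t j0 - t' j0"
    have h1: "p dvd c i0 * x + c j0 * y" using e1 red[OF oth, of c] t t' unfolding x_def y_def
      by (metis (no_types, lifting) dvd_diff mem_Collect_eq)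
    have h2: "p dvd d i0 * x + d j0 * y" using e2 red[OF oth, of d] t t' unfolding x_def y_def
      by (metis (no_types, lifting) dvd_diff mem_Collect_eq)
    have "(c i0 * d j0 - c j0 * d i0) * x = d j0 * (c i0 * x + c j0 * y) - c j0 * (d i0 * x + d j0 * y)"
      by (simp add: algebra_simps)
    hence "p dvd (c i0 * d j0 - c j0 * d i0) * x" using h1 h2 by (metis dvd_diff dvd_mult)
    hence hx: "p dvd x" using p m prime_dvd_mult_iff by blast
    have "(c i0 * d j0 - c j0 * d i0) * y = c i0 * (d i0 * x + d j0 * y) - d i0 * (c i0 * x + c j0 * y)"
      by (simp add: algebra_simps)
    hence "p dvd (c i0 * d j0 - c j0 * d i0) * y" using h1 h2 by (metis dvd_diff dvd_mult)
    hence hy: "p dvd y" using p m prime_dvd_mult_iff by blast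
    have "t i0 = t' i0" using hx t t' i0 unfolding x_def box_def by (intro small_dvd_eq) auto
    moreover have "t j0 = t' j0" using hy t t' j0 unfolding y_def box_def by (intro small_dvd_eq) auto
    ultimately show "t = t'" using oth by (metis ext)
  qed
  have sub: "(\<lambda>t. t(i0:=0, j0:=0)) ` ?S \<subseteq> box ({1..4}-{i0,j0}) p" unfolding box_def by auto
  have "card ?S = card ((\<lambda>t. t(i0:=0, j0:=0)) ` ?S)" using inj by (simp add: card_image)
  also have "\<dots> \<le> card (box ({1..4}-{i0,j0}) p)" by (rule card_mono[OF finite_box sub]) simp
  finally have "int (card ?S) \<le> int (card (box ({1..4}-{i0,j0}) p))" by simp
  also have "\<dots> \<le> p ^ card ({1..4::nat}-{i0,j0})" using p by (intro card_box) (auto simp: prime_ge_0_int)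
  also have "card ({1..4::nat}-{i0,j0}) = 2" using i0 j0 ij by (simp add: card_Diff_subset)
  finally show ?thesis .
qed

definition L :: "(nat \<Rightarrow> int) \<Rightarrow> (nat \<Rightarrow> int) \<Rightarrow> int \<Rightarrow> nat \<Rightarrow> (nat \<Rightarrow> int) \<Rightarrow> nat \<Rightarrow> nat \<Rightarrow> (nat \<Rightarrow> int) set" where
  "L a b p e u k s = {v. (\<forall>i\<in>{1..4}. 0 \<le> v i \<and> v i < p ^ k) \<and> (\<forall>i. i \<notin> {1..4} \<longrightarrow> v i = 0)
      \<and> p^s dvd Q1 a v \<and> p^s dvd Q2 b v \<and> (\<forall>i\<in>{1..4}. [v i = u i] (mod p ^ e))}"

lemma lifts_L: "lifts a b p e f u = L a b p e u f f"
  unfolding lifts_def L_def by (simp add: cong_0_iff)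

lemma L_sub_box: "L a b p e u k s \<subseteq> box {1..4} (p^k)"
  unfolding L_def box_def by auto

lemma finite_L: "finite (L a b p e u k s)"
  by (rule finite_subset[OF L_sub_box finite_box]) simp

lemma card_L_base: assumes "p > 1" shows "card (L a b p e u e s) \<le> 1"
proof -
  have "\<forall>v\<in>L a b p e u e s. \<forall>v'\<in>L a b p e u e s. v = v'"
  proof (intro ballI ext)
    fix v v' i assume v: "v \<in> L a b p e u e s" and v': "v' \<in> L a b p e u e s"
    show "v i = v' i"
    proof (cases "i \<in> {1..4}")
      case True
      then have "v i mod p^e = u i mod p^e" "v' i mod p^e = u i mod p^e"
        using v v' unfolding L_def cong_def by auto
      moreover have "v i mod p^e = v i" "v' i mod p^e = v' i"
        using v v' True unfolding L_def by auto
      ultimately show ?thesis by simp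
    next
      case False thus ?thesis using v v' unfolding L_def by auto
    qed
  qed
  thus ?thesis using card_le_Suc0_iff_eq[OF finite_L] by simp
qed

lemma Q1_shift: "Q1 a (\<lambda>i. w i + m * t i) = Q1 a w + m * (2 * (\<Sum>i\<in>{1..4}. a i * w i * t i)) + m^2 * (\<Sum>i\<in>{1..4}. a i * (t i)^2)"
proof -
  have "Q1 a (\<lambda>i. w i + m * t i) = (\<Sum>i\<in>{1..4}. a i * (w i)^2 + m * (2 * (a i * w i * t i)) + m^2 * (a i * (t i)^2))"
    unfolding Q1_def by (intro sum.cong) (simp_all add: algebra_simps power2_eq_square)
  thus ?thesis unfolding Q1_def by (simp add: sum.distrib sum_distrib_left)
qed

lemma Q2_shift: "Q2 b (\<lambda>i. w i + m * t i) = Q2 b w + m * (2 * (\<Sum>i\<in>{1..4}. (- b i) * w i * t i)) + m^2 * (\<Sum>i\<in>{1..4}. (- b i) * (t i)^2)"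
proof -
  have eq: "Q2 b y = - Q1 b y" for y by (simp add: Q1_def Q2_def)
  have s1: "(\<Sum>i\<in>{1..4}. (- b i) * w i * t i) = - (\<Sum>i\<in>{1..4}. b i * w i * t i)"
    by (simp add: sum_negf[symmetric])
  have s2: "(\<Sum>i\<in>{1..4}. (- b i) * (t i)^2) = - (\<Sum>i\<in>{1..4}. b i * (t i)^2)"
    by (simp add: sum_negf[symmetric])
  show ?thesis unfolding s1 s2 eq Q1_shift by (simp add: algebra_simps)
qed

lemma reduce:
  fixes p :: int
  assumes v: "v \<in> L a b p e u (Suc k) s'" and p: "p > 1" and ke: "e \<le> k" and ss: "s \<le> s'"
    and d1: "p^s dvd p^k * 2" and d2: "p^s dvd p^(2*k)"
  shows "(\<lambda>i. v i mod p^k) \<in> L a b p e u k s" and "(\<lambda>i. v i div p^k) \<in> box {1..4} p"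
    and "v = (\<lambda>i. v i mod p^k + p^k * (v i div p^k))"
proof -
  define w where "w = (\<lambda>i. v i mod p^k)"
  define t where "t = (\<lambda>i. v i div p^k)"
  have pk: "p^k > 0" using p by simp
  show veq: "v = (\<lambda>i. v i mod p^k + p^k * (v i div p^k))" by (simp add: mult_div_mod_eq add.commute)
  have vr: "\<forall>i\<in>{1..4}. 0 \<le> v i \<and> v i < p ^ Suc k" and vz: "\<forall>i. i \<notin> {1..4} \<longrightarrow> v i = 0"
    and vq1: "p^s' dvd Q1 a v" and vq2: "p^s' dvd Q2 b v" and vc: "\<forall>i\<in>{1..4}. [v i = u i] (mod p ^ e)"
    using v unfolding L_def by auto
  show "(\<lambda>i. v i div p^k) \<in> box {1..4} p"
    unfolding box_def
  proof (intro CollectI conjI ballI allI impI)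
    fix i :: nat assume i: "i \<in> {1..4}"
    show "0 \<le> v i div p^k" using vr i pk by (simp add: pos_imp_zdiv_nonneg_iff)
    have "v i < p^k * p" using vr i by (simp add: mult.commute)
    moreover have "p^k * (v i div p^k) + v i mod p^k = v i" by (rule mult_div_mod_eq)
    moreover have "0 \<le> v i mod p^k" using pk by simp
    ultimately have lt: "p^k * (v i div p^k) < p^k * p" by linarith
    show "v i div p^k < p"
    proof (rule ccontr)
      assume "\<not> v i div p^k < p"
      hence "p^k * p \<le> p^k * (v i div p^k)" using pk by (intro mult_left_mono) auto
      thus False using lt by linarith
    qed
  next
    fix i :: nat assume "i \<notin> {1..4}" thus "v i div p^k = 0" using vz by simp
  qed
  have ve: "v = (\<lambda>i. w i + p^k * t i)" using veq unfolding w_def t_def .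
  have dvs: "p^s dvd p^s'" using ss by (simp add: le_imp_power_dvd)
  have sq: "(p^k)^2 = p^(2*k)" by (simp add: power_mult[symmetric] mult.commute)
  have "Q1 a v = Q1 a w + p^k * (2 * (\<Sum>i\<in>{1..4}. a i * w i * t i)) + p^(2*k) * (\<Sum>i\<in>{1..4}. a i * (t i)^2)"
    using Q1_shift[of a w "p^k" t] ve sq by simp
  hence e1: "Q1 a w = Q1 a v - (p^k * 2) * (\<Sum>i\<in>{1..4}. a i * w i * t i) - p^(2*k) * (\<Sum>i\<in>{1..4}. a i * (t i)^2)"
    by (simp add: algebra_simps)
  have "p^s dvd Q1 a v - (p^k * 2) * (\<Sum>i\<in>{1..4}. a i * w i * t i) - p^(2*k) * (\<Sum>i\<in>{1..4}. a i * (t i)^2)"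
    by (intro dvd_diff dvd_trans[OF dvs vq1] dvd_mult2[OF d1] dvd_mult2[OF d2])
  hence q1: "p^s dvd Q1 a w" by (subst e1)
  have "Q2 b v = Q2 b w + p^k * (2 * (\<Sum>i\<in>{1..4}. (- b i) * w i * t i)) + p^(2*k) * (\<Sum>i\<in>{1..4}. (- b i) * (t i)^2)"
    using Q2_shift[of b w "p^k" t] ve sq by simp
  hence e2: "Q2 b w = Q2 b v - (p^k * 2) * (\<Sum>i\<in>{1..4}. (- b i) * w i * t i) - p^(2*k) * (\<Sum>i\<in>{1..4}. (- b i) * (t i)^2)"
    by (simp add: algebra_simps)
  have "p^s dvd Q2 b v - (p^k * 2) * (\<Sum>i\<in>{1..4}. (- b i) * w i * t i) - p^(2*k) * (\<Sum>i\<in>{1..4}. (- b i) * (t i)^2)"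
    by (intro dvd_diff dvd_trans[OF dvs vq2] dvd_mult2[OF d1] dvd_mult2[OF d2])
  hence q2: "p^s dvd Q2 b w" by (subst e2)
  have dek: "p^e dvd p^k" using ke by (simp add: le_imp_power_dvd)
  show "(\<lambda>i. v i mod p^k) \<in> L a b p e u k s"
    unfolding L_def
  proof (intro CollectI conjI ballI allI impI)
    fix i :: nat assume i: "i \<in> {1..4}"
    show "0 \<le> v i mod p^k" "v i mod p^k < p^k" using pk by simp_all
    have "(v i mod p^k) mod p^e = v i mod p^e" using dek by (simp add: mod_mod_cancel)
    thus "[v i mod p^k = u i] (mod p^e)" using vc i unfolding cong_def by simp
  next
    fix i :: nat assume "i \<notin> {1..4}" thus "v i mod p^k = 0" using vz by simp
  next
    show "p^s dvd Q1 a (\<lambda>i. v i mod p^k)" using q1 unfolding w_def .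
    show "p^s dvd Q2 b (\<lambda>i. v i mod p^k)" using q2 unfolding w_def .
  qed
qed

lemma step_general:
  fixes p :: int
  assumes p: "p > 1" and ke: "e \<le> k" and ss: "s \<le> s'" and d1: "p^s dvd p^k * 2" and d2: "p^s dvd p^(2*k)"
    and P: "\<And>v. v \<in> L a b p e u (Suc k) s' \<Longrightarrow> P (\<lambda>i. v i mod p^k) (\<lambda>i. v i div p^k)"
    and C: "\<And>w. w \<in> L a b p e u k s \<Longrightarrow> int (card {t \<in> box {1..4} p. P w t}) \<le> c"
  shows "int (card (L a b p e u (Suc k) s')) \<le> c * int (card (L a b p e u k s))"
proof (rule card_fiber[OF finite_L])
  fix v assume "v \<in> L a b p e u (Suc k) s'"
  thus "(\<lambda>i. v i mod p^k) \<in> L a b p e u k s" using reduce(1)[OF _ p ke ss d1 d2] by blast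
next
  fix w assume w: "w \<in> L a b p e u k s"
  let ?F = "{v \<in> L a b p e u (Suc k) s'. (\<lambda>i. v i mod p^k) = w}"
  have "card ?F \<le> card {t \<in> box {1..4} p. P w t}"
  proof (rule card_inj_on_le)
    show "inj_on (\<lambda>v i. v i div p^k) ?F"
    proof (rule inj_onI)
      fix v v' assume v: "v \<in> ?F" and v': "v' \<in> ?F" and eq: "(\<lambda>i. v i div p^k) = (\<lambda>i. v' i div p^k)"
      have "v = (\<lambda>i. v i mod p^k + p^k * (v i div p^k))" "v' = (\<lambda>i. v' i mod p^k + p^k * (v' i div p^k))"
        using reduce(3)[OF _ p ke ss d1 d2] v v' by blast+
      moreover have "(\<lambda>i. v i mod p^k) = (\<lambda>i. v' i mod p^k)" using v v' by simp
      ultimately show "v = v'" using eq by (metis (no_types) fun_eq_iff)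
    qed
    show "(\<lambda>v i. v i div p^k) ` ?F \<subseteq> {t \<in> box {1..4} p. P w t}"
      using reduce(2)[OF _ p ke ss d1 d2] P by blast
    show "finite {t \<in> box {1..4} p. P w t}" using finite_box by simp
  qed
  thus "int (card ?F) \<le> c" using C[OF w] by linarith
qed

lemma step_dvd:
  fixes p q S E :: int
  assumes "p^k dvd q" "p^(Suc k) dvd (q + p^k * S + p^(2*k) * E)" "k \<ge> 1" "p \<noteq> 0"
  shows "p dvd (q div p^k + S)"
proof -
  obtain q' where q: "q = p^k * q'" using assms(1) by blast
  have "p^(2*k) = p^k * p^k" by (simp add: mult_2 power_add)
  hence "q + p^k*S + p^(2*k)*E = p^k * (q' + S + p^k * E)" by (simp add: q algebra_simps)
  hence "p^k * p dvd p^k * (q' + S + p^k*E)" using assms(2) by (simp add: mult.commute)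
  hence "p dvd (q' + S + p^k*E)" using assms(4) by simp
  moreover have "p dvd p^k * E" using assms(3) by (simp add: dvd_power)
  ultimately have "p dvd q' + S" by (metis add_diff_cancel_right' dvd_diff)
  moreover have "q div p^k = q'" using q assms(4) by simp
  ultimately show ?thesis by simp
qed

lemma step_dvd2:
  fixes q S E :: int
  assumes "2^(Suc k) dvd q" "2^(Suc (Suc k)) dvd (q + 2^k * (2*S) + 2^(2*k) * E)" "k \<ge> 2"
  shows "2 dvd (q div 2^(Suc k) + S)"
proof -
  obtain q' where q: "q = 2^(Suc k) * q'" using assms(1) by blast
  have ek: "2*k = Suc k + (k - 1)" using assms(3) by simp
  have "(2::int)^(2*k) = 2^(Suc k) * 2^(k-1)" unfolding ek by (rule power_add)
  hence "q + 2^k * (2*S) + 2^(2*k) * E = 2^(Suc k) * (q' + S + 2^(k-1) * E)" by (simp add: q algebra_simps)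
  hence "2^(Suc k) * 2 dvd 2^(Suc k) * (q' + S + 2^(k-1)*E)" using assms(2) by (simp add: mult.commute)
  moreover have nz: "(2::int)^(Suc k) \<noteq> 0" by simp
  ultimately have "2 dvd (q' + S + 2^(k-1)*E)" using dvd_times_left_cancel_iff[OF nz] by blast
  moreover have "(2::int) dvd 2^(k-1) * E" using assms(3) by (simp add: dvd_power)
  ultimately have "2 dvd q' + S" by (metis add_diff_cancel_right' dvd_diff)
  moreover have "q div 2^(Suc k) = q'" using q by simp
  ultimately show ?thesis by simp
qed

lemma not_dvd_w:
  fixes p :: int
  assumes w: "w \<in> L a b p e u k s" and e: "e \<ge> 1" and i: "i \<in> {1..4}" and ui: "\<not> p dvd u i"
  shows "\<not> p dvd w i"
proof
  assume pw: "p dvd w i"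
  have "[w i = u i] (mod p^e)" using w i unfolding L_def by auto
  hence "p^e dvd w i - u i" by (simp add: cong_iff_dvd_diff)
  moreover have "p dvd p^e" using e by (simp add: dvd_power)
  ultimately have "p dvd w i - u i" by (rule dvd_trans[rotated])
  from dvd_diff[OF pw this] have "p dvd u i" by simp
  thus False using ui by simp
qed

lemma prime_not_dvd_2:
  fixes p :: int
  assumes "prime p" "p \<noteq> 2" shows "\<not> p dvd 2"
proof
  assume "p dvd 2"
  hence "p \<le> 2" by (simp add: zdvd_imp_le)
  moreover have "p \<ge> 2" using assms by (simp add: prime_ge_2_int)
  ultimately show False using assms by simp
qed

definition Podd where
  "Podd a b p k w t \<longleftrightarrow> p dvd (Q1 a w div p^k + (\<Sum>i\<in>{1..4}. (2 * a i * w i) * t i))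
     \<and> p dvd (Q2 b w div p^k + (\<Sum>i\<in>{1..4}. (2 * (- b i) * w i) * t i))"

lemma odd_P:
  fixes p :: int
  assumes v: "v \<in> L a b p e u (Suc k) (Suc k)" and p: "p > 1" and ke: "e \<le> k" and e: "e \<ge> 1"
  shows "Podd a b p k (\<lambda>i. v i mod p^k) (\<lambda>i. v i div p^k)"
proof -
  have d1: "p^k dvd p^k * 2" by simp
  have d2: "p^k dvd p^(2*k)" by (simp add: le_imp_power_dvd)
  define w where "w = (\<lambda>i. v i mod p^k)"
  define t where "t = (\<lambda>i. v i div p^k)"
  have wL: "w \<in> L a b p e u k k" unfolding w_def using reduce(1)[OF v p ke less_imp_le[OF lessI] d1 d2] .
  have ve: "v = (\<lambda>i. w i + p^k * t i)" unfolding w_def t_def using reduce(3)[OF v p ke less_imp_le[OF lessI] d1 d2] .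
  have sq: "(p^k)^2 = p^(2*k)" by (simp add: power_mult[symmetric] mult.commute)
  have k1: "k \<ge> 1" using ke e by simp
  have p0: "p \<noteq> 0" using p by simp
  have s1: "2 * (\<Sum>i\<in>{1..4}. a i * w i * t i) = (\<Sum>i\<in>{1..4}. (2 * a i * w i) * t i)"
    by (simp add: sum_distrib_left mult.assoc)
  have s2: "2 * (\<Sum>i\<in>{1..4}. (- b i) * w i * t i) = (\<Sum>i\<in>{1..4}. (2 * (- b i) * w i) * t i)"
    by (simp add: sum_distrib_left mult.assoc)
  have qa: "Q1 a v = Q1 a w + p^k * (2 * (\<Sum>i\<in>{1..4}. a i * w i * t i)) + p^(2*k) * (\<Sum>i\<in>{1..4}. a i * (t i)^2)"
    using Q1_shift[of a w "p^k" t] ve sq by simp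
  have "p^(Suc k) dvd Q1 a v" using v unfolding L_def by auto
  hence qv: "p^(Suc k) dvd Q1 a w + p^k * (2 * (\<Sum>i\<in>{1..4}. a i * w i * t i)) + p^(2*k) * (\<Sum>i\<in>{1..4}. a i * (t i)^2)"
    unfolding qa .
  have qw: "p^k dvd Q1 a w" using wL unfolding L_def by auto
  have "p dvd (Q1 a w div p^k + (2 * (\<Sum>i\<in>{1..4}. a i * w i * t i)))"
    by (rule step_dvd[OF qw qv k1 p0])
  hence h1: "p dvd (Q1 a w div p^k + (\<Sum>i\<in>{1..4}. (2 * a i * w i) * t i))" unfolding s1 .
  have qa: "Q2 b v = Q2 b w + p^k * (2 * (\<Sum>i\<in>{1..4}. (- b i) * w i * t i)) + p^(2*k) * (\<Sum>i\<in>{1..4}. (- b i) * (t i)^2)"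
    using Q2_shift[of b w "p^k" t] ve sq by simp
  have "p^(Suc k) dvd Q2 b v" using v unfolding L_def by auto
  hence qv: "p^(Suc k) dvd Q2 b w + p^k * (2 * (\<Sum>i\<in>{1..4}. (- b i) * w i * t i)) + p^(2*k) * (\<Sum>i\<in>{1..4}. (- b i) * (t i)^2)"
    unfolding qa .
  have qw: "p^k dvd Q2 b w" using wL unfolding L_def by auto
  have "p dvd (Q2 b w div p^k + (2 * (\<Sum>i\<in>{1..4}. (- b i) * w i * t i)))"
    by (rule step_dvd[OF qw qv k1 p0])
  hence h2: "p dvd (Q2 b w div p^k + (\<Sum>i\<in>{1..4}. (2 * (- b i) * w i) * t i))" unfolding s2 .
  show ?thesis using h1 h2 unfolding Podd_def w_def t_def by blast
qed

lemma odd_step1: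
  fixes p :: int
  assumes p: "prime p" "p \<noteq> 2" and e: "e \<ge> 1" and ke: "e \<le> k"
    and i0: "i0 \<in> {1..4}" and ui: "\<not> p dvd u i0" and ab: "\<not> p dvd a i0 \<or> \<not> p dvd b i0"
  shows "int (card (L a b p e u (Suc k) (Suc k))) \<le> p^3 * int (card (L a b p e u k k))"
proof -
  have p1: "p > 1" using p by (simp add: prime_gt_1_int)
  show ?thesis
  proof (rule step_general[where P = "Podd a b p k"])
    show "p > 1" "e \<le> k" "k \<le> Suc k" by (fact p1, fact ke, simp)
    show "p^k dvd p^k * 2" by simp
    show "p^k dvd p^(2*k)" by (simp add: le_imp_power_dvd)
  next
    fix v assume "v \<in> L a b p e u (Suc k) (Suc k)"
    thus "Podd a b p k (\<lambda>i. v i mod p ^ k) (\<lambda>i. v i div p ^ k)" by (rule odd_P[OF _ p1 ke e])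
  next
    fix w assume w: "w \<in> L a b p e u k k"
    have pw: "\<not> p dvd w i0" using not_dvd_w[OF w e i0 ui] .
    have p2: "\<not> p dvd 2" using prime_not_dvd_2 p by blast
    show "int (card {t \<in> box {1..4} p. Podd a b p k w t}) \<le> p^3"
    proof (cases "p dvd a i0")
      case False
      have "\<not> p dvd (2 * a i0 * w i0)" using False pw p2 p by (simp add: prime_dvd_mult_iff)
      hence "int (card {t \<in> box {1..4} p. p dvd (Q1 a w div p^k + (\<Sum>i\<in>{1..4}. (2 * a i * w i) * t i))}) \<le> p^3"
        by (intro lin1[OF p(1) i0])
      moreover have "card {t \<in> box {1..4} p. Podd a b p k w t} \<le> card {t \<in> box {1..4} p. p dvd (Q1 a w div p^k + (\<Sum>i\<in>{1..4}. (2 * a i * w i) * t i))}"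
        by (rule card_mono) (simp add: finite_box, blast intro: Collect_mono_iff[THEN iffD2] dest: Podd_def[THEN iffD1])
      ultimately show ?thesis by linarith
    next
      case True
      hence "\<not> p dvd b i0" using ab by blast
      hence "\<not> p dvd (2 * (- b i0) * w i0)" using pw p2 p by (simp add: prime_dvd_mult_iff)
      hence "int (card {t \<in> box {1..4} p. p dvd (Q2 b w div p^k + (\<Sum>i\<in>{1..4}. (2 * (- b i) * w i) * t i))}) \<le> p^3"
        by (intro lin1[OF p(1) i0])
      moreover have "card {t \<in> box {1..4} p. Podd a b p k w t} \<le> card {t \<in> box {1..4} p. p dvd (Q2 b w div p^k + (\<Sum>i\<in>{1..4}. (2 * (- b i) * w i) * t i))}"
        by (rule card_mono) (simp add: finite_box, blast intro: Collect_mono_iff[THEN iffD2] dest: Podd_def[THEN iffD1])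
      ultimately show ?thesis by linarith
    qed
  qed
qed

lemma odd_step2:
  fixes p :: int
  assumes p: "prime p" "p \<noteq> 2" and e: "e \<ge> 1" and ke: "e \<le> k"
    and i0: "i0 \<in> {1..4}" and j0: "j0 \<in> {1..4}" and ij: "i0 \<noteq> j0"
    and ui: "\<not> p dvd u i0" and uj: "\<not> p dvd u j0" and D: "\<not> p dvd (a i0 * b j0 - a j0 * b i0)"
  shows "int (card (L a b p e u (Suc k) (Suc k))) \<le> p^2 * int (card (L a b p e u k k))"
proof -
  have p1: "p > 1" using p by (simp add: prime_gt_1_int)
  show ?thesis
  proof (rule step_general[where P = "Podd a b p k"])
    show "p > 1" "e \<le> k" "k \<le> Suc k" by (fact p1, fact ke, simp)
    show "p^k dvd p^k * 2" by simp
    show "p^k dvd p^(2*k)" by (simp add: le_imp_power_dvd)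
  next
    fix v assume "v \<in> L a b p e u (Suc k) (Suc k)"
    thus "Podd a b p k (\<lambda>i. v i mod p ^ k) (\<lambda>i. v i div p ^ k)" by (rule odd_P[OF _ p1 ke e])
  next
    fix w assume w: "w \<in> L a b p e u k k"
    have pwi: "\<not> p dvd w i0" using not_dvd_w[OF w e i0 ui] .
    have pwj: "\<not> p dvd w j0" using not_dvd_w[OF w e j0 uj] .
    have p2: "\<not> p dvd 2" using prime_not_dvd_2 p by blast
    have eq: "(2 * a i0 * w i0) * (2 * (- b j0) * w j0) - (2 * a j0 * w j0) * (2 * (- b i0) * w i0)
        = - (4 * (w i0 * (w j0 * (a i0 * b j0 - a j0 * b i0))))" by (simp add: algebra_simps)
    have p4: "\<not> p dvd 4" using p2 p prime_dvd_mult_iff[of p 2 2] by simp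
    have "\<not> p dvd (2 * a i0 * w i0) * (2 * (- b j0) * w j0) - (2 * a j0 * w j0) * (2 * (- b i0) * w i0)"
      unfolding eq using p pwi pwj p4 D by (simp add: prime_dvd_mult_iff)
    thus "int (card {t \<in> box {1..4} p. Podd a b p k w t}) \<le> p^2"
      unfolding Podd_def by (rule lin2[OF p(1) i0 j0 ij])
  qed
qed

definition Ptwo where
  "Ptwo a b k w t \<longleftrightarrow> (2::int) dvd (Q1 a w div 2^(Suc k) + (\<Sum>i\<in>{1..4}. (a i * w i) * t i))
     \<and> 2 dvd (Q2 b w div 2^(Suc k) + (\<Sum>i\<in>{1..4}. ((- b i) * w i) * t i))"

lemma two_step8:
  assumes e: "e \<ge> 1" and ke: "e \<le> k" and k2: "k \<ge> 2"
    and i0: "i0 \<in> {1..4}" and ui: "\<not> 2 dvd u i0" and ab: "\<not> 2 dvd a i0 \<or> \<not> 2 dvd b i0"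
  shows "int (card (L a b 2 e u (Suc k) (Suc (Suc k)))) \<le> 8 * int (card (L a b 2 e u k (Suc k)))"
proof -
  have p1: "(2::int) > 1" by simp
  have d1: "(2::int)^(Suc k) dvd 2^k * 2" by simp
  have d2: "(2::int)^(Suc k) dvd 2^(2*k)" using k2 by (intro le_imp_power_dvd) simp
  have ss: "Suc k \<le> Suc (Suc k)" by simp
  have "int (card (L a b 2 e u (Suc k) (Suc (Suc k)))) \<le> 2^3 * int (card (L a b 2 e u k (Suc k)))"
  proof (rule step_general[where P = "Ptwo a b k", OF p1 ke ss d1 d2])
    fix v assume v: "v \<in> L a b 2 e u (Suc k) (Suc (Suc k))"
    define w where "w = (\<lambda>i. v i mod 2^k)"
    define t where "t = (\<lambda>i. v i div 2^k)"
    have wL: "w \<in> L a b 2 e u k (Suc k)" unfolding w_def using reduce(1)[OF v p1 ke ss d1 d2] .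
    have ve: "v = (\<lambda>i. w i + 2^k * t i)" unfolding w_def t_def using reduce(3)[OF v p1 ke ss d1 d2] .
    have sq: "((2::int)^k)^2 = 2^(2*k)" by (simp add: power_mult[symmetric] mult.commute)
    have qa: "Q1 a v = Q1 a w + 2^k * (2 * (\<Sum>i\<in>{1..4}. a i * w i * t i)) + 2^(2*k) * (\<Sum>i\<in>{1..4}. a i * (t i)^2)"
      using Q1_shift[of a w "2^k" t] ve sq by simp
    have "2^(Suc (Suc k)) dvd Q1 a v" using v unfolding L_def by auto
    hence qv: "2^(Suc (Suc k)) dvd Q1 a w + 2^k * (2 * (\<Sum>i\<in>{1..4}. a i * w i * t i)) + 2^(2*k) * (\<Sum>i\<in>{1..4}. a i * (t i)^2)"
      unfolding qa .
    have qw: "2^(Suc k) dvd Q1 a w" using wL unfolding L_def by auto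
    have h1: "2 dvd (Q1 a w div 2^(Suc k) + (\<Sum>i\<in>{1..4}. a i * w i * t i))"
      by (rule step_dvd2[OF qw qv k2])
    have qa: "Q2 b v = Q2 b w + 2^k * (2 * (\<Sum>i\<in>{1..4}. (- b i) * w i * t i)) + 2^(2*k) * (\<Sum>i\<in>{1..4}. (- b i) * (t i)^2)"
      using Q2_shift[of b w "2^k" t] ve sq by simp
    have "2^(Suc (Suc k)) dvd Q2 b v" using v unfolding L_def by auto
    hence qv: "2^(Suc (Suc k)) dvd Q2 b w + 2^k * (2 * (\<Sum>i\<in>{1..4}. (- b i) * w i * t i)) + 2^(2*k) * (\<Sum>i\<in>{1..4}. (- b i) * (t i)^2)"
      unfolding qa .
    have qw: "2^(Suc k) dvd Q2 b w" using wL unfolding L_def by auto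
    have h2: "2 dvd (Q2 b w div 2^(Suc k) + (\<Sum>i\<in>{1..4}. (- b i) * w i * t i))"
      by (rule step_dvd2[OF qw qv k2])
    show "Ptwo a b k (\<lambda>i. v i mod 2 ^ k) (\<lambda>i. v i div 2 ^ k)"
      using h1 h2 unfolding Ptwo_def w_def t_def by blast
  next
    fix w assume w: "w \<in> L a b 2 e u k (Suc k)"
    have pw: "\<not> 2 dvd w i0" using not_dvd_w[OF w e i0 ui] .
    have pr: "prime (2::int)" by simp
    show "int (card {t \<in> box {1..4} 2. Ptwo a b k w t}) \<le> 2^3"
    proof (cases "2 dvd a i0")
      case False
      have "\<not> 2 dvd (a i0 * w i0)" using False pw by simp
      hence "int (card {t \<in> box {1..4} 2. 2 dvd (Q1 a w div 2^(Suc k) + (\<Sum>i\<in>{1..4}. (a i * w i) * t i))}) \<le> 2^3"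
        by (intro lin1[OF pr i0])
      moreover have "card {t \<in> box {1..4} 2. Ptwo a b k w t} \<le> card {t \<in> box {1..4} 2. 2 dvd (Q1 a w div 2^(Suc k) + (\<Sum>i\<in>{1..4}. (a i * w i) * t i))}"
        by (rule card_mono) (auto simp: finite_box Ptwo_def)
      ultimately show ?thesis by linarith
    next
      case True
      hence "\<not> 2 dvd b i0" using ab by blast
      hence "\<not> 2 dvd ((- b i0) * w i0)" using pw by simp
      hence "int (card {t \<in> box {1..4} 2. 2 dvd (Q2 b w div 2^(Suc k) + (\<Sum>i\<in>{1..4}. ((- b i) * w i) * t i))}) \<le> 2^3"
        by (intro lin1[OF pr i0])
      moreover have "card {t \<in> box {1..4} 2. Ptwo a b k w t} \<le> card {t \<in> box {1..4} 2. 2 dvd (Q2 b w div 2^(Suc k) + (\<Sum>i\<in>{1..4}. ((- b i) * w i) * t i))}"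
        by (rule card_mono) (auto simp: finite_box Ptwo_def)
      ultimately show ?thesis by linarith
    qed
  qed
  thus ?thesis by simp
qed

lemma two_step16:
  assumes ke: "e \<le> k" and k1: "k \<ge> 1" and ss: "Suc k \<le> s'"
  shows "int (card (L a b 2 e u (Suc k) s')) \<le> 16 * int (card (L a b 2 e u k (Suc k)))"
proof -
  have p1: "(2::int) > 1" by simp
  have d1: "(2::int)^(Suc k) dvd 2^k * 2" by simp
  have d2: "(2::int)^(Suc k) dvd 2^(2*k)" using k1 by (intro le_imp_power_dvd) simp
  have cb0: "int (card (box {1..4::nat} (2::int))) \<le> 2 ^ card {1..4::nat}" by (rule card_box) simp_all
  have cb: "int (card {t \<in> box {1..4::nat} (2::int). True}) \<le> 16" using cb0 by simp
  show ?thesis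
    by (rule step_general[where P = "\<lambda>w t. True", OF p1 ke ss d1 d2]) (rule TrueI, rule cb)
qed

lemma chain_odd:
  fixes p c :: int
  assumes p: "p > 1" and c: "c \<ge> 0"
    and st: "\<And>k. e \<le> k \<Longrightarrow> int (card (L a b p e u (Suc k) (Suc k))) \<le> c * int (card (L a b p e u k k))"
  shows "int (card (L a b p e u (e + j) (e + j))) \<le> c ^ j"
proof (induction j)
  case 0 show ?case using card_L_base[OF p, of a b e u e] by simp
next
  case (Suc j)
  have "int (card (L a b p e u (e + Suc j) (e + Suc j))) \<le> c * int (card (L a b p e u (e+j) (e+j)))"
    using st[of "e+j"] by simp
  also have "\<dots> \<le> c * c^j" using Suc.IH c by (rule mult_left_mono)
  finally show ?case by simp
qed

lemma chain_two:
  assumes e: "e \<ge> 1" and i0: "i0 \<in> {1..4}" and ui: "\<not> 2 dvd u i0" and ab: "\<not> 2 dvd a i0 \<or> \<not> 2 dvd b i0"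
  shows "int (card (L a b 2 e u (e + j) (Suc (e + j)))) \<le> 2 * 8 ^ j"
proof (induction j)
  case 0 show ?case using card_L_base[of 2 a b e u "Suc e"] by simp
next
  case (Suc j)
  show ?case
  proof (cases "e + j \<ge> 2")
    case True
    have "int (card (L a b 2 e u (Suc (e + j)) (Suc (Suc (e + j))))) \<le> 8 * int (card (L a b 2 e u (e+j) (Suc (e+j))))"
      using two_step8[where u=u and a=a and b=b and k="e+j" and e=e, OF e le_add1 True i0 ui ab] by simp
    also have "\<dots> \<le> 8 * (2 * 8^j)" using Suc.IH by simp
    finally show ?thesis by simp
  next
    case False
    hence ej: "e = 1" "j = 0" using e by auto
    have "int (card (L a b 2 e u (Suc e) (Suc (Suc e)))) \<le> 16 * int (card (L a b 2 e u e (Suc e)))"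
      by (rule two_step16) (use e in simp_all)
    moreover have "card (L a b 2 e u e (Suc e)) \<le> 1" by (rule card_L_base) simp
    ultimately show ?thesis using ej by simp
  qed
qed

lemma two_units:
  fixes p :: int
  assumes p: "prime p" and e: "e \<ge> 1" and i0: "i0 \<in> {1..4}" and ui: "\<not> p dvd u i0"
    and ab: "\<not> (p dvd a i0 \<and> p dvd b i0)"
    and q1: "[Q1 a u = 0] (mod p^e)" and q2: "[Q2 b u = 0] (mod p^e)"
  shows "\<exists>j0\<in>{1..4}. j0 \<noteq> i0 \<and> \<not> p dvd u j0"
proof (rule ccontr)
  assume "\<not> ?thesis"
  hence oth: "\<And>j. j \<in> {1..4}-{i0} \<Longrightarrow> p dvd u j" by auto
  have pe: "p dvd p^e" using e by (simp add: dvd_power)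
  have u2: "\<not> p dvd (u i0)^2" using p ui by (simp add: prime_dvd_power_iff)
  have "p^e dvd Q1 a u" using q1 by (simp add: cong_0_iff)
  hence d1: "p dvd Q1 a u" using pe by (rule dvd_trans[rotated])
  have e1: "Q1 a u = a i0 * (u i0)^2 + (\<Sum>j\<in>{1..4}-{i0}. a j * (u j)^2)" unfolding Q1_def using i0 by (simp add: sum.remove)
  have r1: "p dvd (\<Sum>j\<in>{1..4}-{i0}. a j * (u j)^2)"
    by (rule dvd_sum) (simp add: oth power2_eq_square)
  have "p dvd Q1 a u - (\<Sum>j\<in>{1..4}-{i0}. a j * (u j)^2)" using d1 r1 by (rule dvd_diff)
  hence "p dvd a i0 * (u i0)^2" using e1 by simp
  hence pa: "p dvd a i0" using p u2 by (simp add: prime_dvd_mult_iff)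
  have "p^e dvd Q2 b u" using q2 by (simp add: cong_0_iff)
  hence d2: "p dvd Q1 b u" using pe unfolding Q2_def Q1_def by (simp add: dvd_trans[rotated])
  have e2: "Q1 b u = b i0 * (u i0)^2 + (\<Sum>j\<in>{1..4}-{i0}. b j * (u j)^2)" unfolding Q1_def using i0 by (simp add: sum.remove)
  have r2: "p dvd (\<Sum>j\<in>{1..4}-{i0}. b j * (u j)^2)"
    by (rule dvd_sum) (simp add: oth power2_eq_square)
  have "p dvd Q1 b u - (\<Sum>j\<in>{1..4}-{i0}. b j * (u j)^2)" using d2 r2 by (rule dvd_diff)
  hence "p dvd b i0 * (u i0)^2" using e2 by simp
  hence pb: "p dvd b i0" using p u2 by (simp add: prime_dvd_mult_iff)
  show False using ab pa pb by blast
qed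

theorem lemma3p3:
  fixes a b :: "nat \<Rightarrow> int" and p :: int and e f :: nat and u :: "nat \<Rightarrow> int"
  assumes coprime_ab: "\<forall>i\<in>{1..4}. gcd (a i) (b i) = 1"
    and nonprop: "\<forall>i\<in>{1..4}. \<forall>j\<in>{1..4}. i \<noteq> j \<longrightarrow> a i * b j - a j * b i \<noteq> 0"
    and p: "prime p"
    and e: "e \<ge> 1"
    and u_prim: "\<exists>i\<in>{1..4}. \<not> p dvd u i"
    and u_Q1: "[Q1 a u = 0] (mod p ^ e)"
    and u_Q2: "[Q2 b u = 0] (mod p ^ e)"
    and f: "f > e"
  shows "(\<not> p dvd Delta a b \<longrightarrow> int (card (lifts a b p e f u)) \<le> p ^ (2 * (f - e)))
       \<and> (p dvd Delta a b \<longrightarrow> int (card (lifts a b p e f u)) \<le> p ^ (2 * nu p + 3 * (f - e)))"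
proof -
  have p1: "p > 1" using p by (simp add: prime_gt_1_int)
  let ?D = "\<lambda>i j. a i * b j - a j * b i"
  have fin: "finite (bad_primes a b)"
  proof (rule finite_subset)
    show "bad_primes a b \<subseteq> insert 2 (\<Union>i\<in>{1..4}. \<Union>j\<in>{1..4}. {d. d dvd ?D i j \<and> i \<noteq> j})"
      unfolding bad_primes_def by auto
    have "finite {d. d dvd ?D i j \<and> i \<noteq> j}" if "i \<in> {1..4}" "j \<in> {1..4}" for i j
    proof (cases "i = j")
      case True thus ?thesis by simp
    next
      case False
      hence nz: "?D i j \<noteq> 0" using nonprop that by blast
      have "{d. d dvd ?D i j \<and> i \<noteq> j} \<subseteq> {-\<bar>?D i j\<bar>..\<bar>?D i j\<bar>}"
      proof
        fix x assume "x \<in> {d. d dvd ?D i j \<and> i \<noteq> j}"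
        hence "\<bar>x\<bar> \<le> \<bar>?D i j\<bar>" using dvd_imp_le_int[OF nz] by blast
        thus "x \<in> {-\<bar>?D i j\<bar>..\<bar>?D i j\<bar>}" by (simp add: abs_le_iff)
      qed
      thus ?thesis by (rule finite_subset) simp
    qed
    thus "finite (insert 2 (\<Union>i\<in>{1..4}. \<Union>j\<in>{1..4}. {d. d dvd ?D i j \<and> i \<noteq> j}))"
      by (intro finite_insert[THEN iffD2] finite_UN_I) auto
  qed
  have inD: "q dvd Delta a b" if "q \<in> bad_primes a b" for q
    unfolding Delta_def using dvd_prodI[OF fin that, of "\<lambda>p. p"] by simp
  obtain i0 where i0: "i0 \<in> {1..4}" and ui: "\<not> p dvd u i0" using u_prim by blast
  have ab: "\<not> (p dvd a i0 \<and> p dvd b i0)"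
  proof
    assume "p dvd a i0 \<and> p dvd b i0"
    hence "p dvd gcd (a i0) (b i0)" by simp
    moreover have "gcd (a i0) (b i0) = 1" using coprime_ab i0 by blast
    ultimately have "p dvd 1" by metis
    thus False using p not_prime_unit by blast
  qed
  have lf: "lifts a b p e f u = L a b p e u (e + (f - e)) (e + (f - e))" using f by (simp add: lifts_L)
  show ?thesis
  proof (cases "p = 2")
    case True
    have "2 \<in> bad_primes a b" unfolding bad_primes_def by simp
    hence pD: "p dvd Delta a b" using inD True by simp
    define n where "n = f - 1 - e"
    have fn: "f = Suc (e + n)" "f - e = Suc n" using f unfolding n_def by auto
    have "int (card (L a b 2 e u (Suc (e + n)) (Suc (e + n)))) \<le> 16 * int (card (L a b 2 e u (e + n) (Suc (e + n))))"
      by (rule two_step16) (use e in simp_all)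
    also have "\<dots> \<le> 16 * (2 * 8 ^ n)"
      using chain_two[OF e i0, of u a b n] ui ab True by simp
    also have "\<dots> = 2 ^ (2 * nu 2 + 3 * Suc n)" by (simp add: nu_def power_add power_mult)
    finally have "int (card (lifts a b 2 e f u)) \<le> 2 ^ (2 * nu 2 + 3 * (f - e))"
      unfolding fn lifts_L by simp
    thus ?thesis using pD True by simp
  next
    case False
    have ab': "\<not> p dvd a i0 \<or> \<not> p dvd b i0" using ab by blast
    have c3: "int (card (L a b p e u (e + (f - e)) (e + (f - e)))) \<le> (p^3) ^ (f - e)"
    proof (rule chain_odd[OF p1])
      show "0 \<le> p^3" using p1 by simp
      fix k assume "e \<le> k"
      thus "int (card (L a b p e u (Suc k) (Suc k))) \<le> p^3 * int (card (L a b p e u k k))"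
        by (rule odd_step1[where u=u and a=a and b=b, OF p False e _ i0 ui ab'])
    qed
    have part2: "int (card (lifts a b p e f u)) \<le> p ^ (2 * nu p + 3 * (f - e))"
      using c3 False unfolding lf by (simp add: nu_def power_mult)
    have part1: "int (card (lifts a b p e f u)) \<le> p ^ (2 * (f - e))" if nD: "\<not> p dvd Delta a b"
    proof -
      have nb: "p \<notin> bad_primes a b" using inD nD by blast
      have Dn: "\<not> p dvd ?D i j" if "i \<in> {1..4}" "j \<in> {1..4}" "i \<noteq> j" for i j
        using nb that p unfolding bad_primes_def by blast
      obtain j0 where j0: "j0 \<in> {1..4}" "j0 \<noteq> i0" "\<not> p dvd u j0"
        using two_units[OF p e i0 ui ab u_Q1 u_Q2] by blast
      have c2: "int (card (L a b p e u (e + (f - e)) (e + (f - e)))) \<le> (p^2) ^ (f - e)"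
      proof (rule chain_odd[OF p1])
        show "0 \<le> p^2" using p1 by simp
        fix k assume "e \<le> k"
        thus "int (card (L a b p e u (Suc k) (Suc k))) \<le> p^2 * int (card (L a b p e u k k))"
          by (rule odd_step2[where u=u and a=a and b=b, OF p False e _ i0 j0(1) j0(2)[symmetric] ui j0(3) Dn[OF i0 j0(1) j0(2)[symmetric]]])
      qed
      thus ?thesis unfolding lf by (simp add: power_mult)
    qed
    show ?thesis using part1 part2 by blast
  qed
qed

end
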